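(* Let $n>s\ge1$ be integers and $g(x)=\sum_{i=0}^sa_ix^i\in\mathbb{R}[x]$ of degree $s$ with nonzero discriminant, and let $f(t,x)=x^n+t\,g(x)$. Suppose $g$ has no real roots, $n-s$ is even, and $a_s>0$. Then for every real $\beta>\max\{\alpha\in\mathbb{R}\mid \Delta_{f,x}(\alpha)=0\}$, the polynomial $f(\beta,x)$ has no real roots (it is totally complex).
   Context: $\Delta_{f,x}(t)$ denotes the discriminant of $f(t,x)$ with respect to $x$, a polynomial in $t$ (it vanishes at $t=0$). A real polynomial is totally complex if it has no real roots. *)

theory Defs
  imports "HOL-Computational_Algebra.Polynomial" "Subresultants.Resultant_Prelim"
begin

text \<open>Discriminant of a univariate polynomial p of degree d over an integral domain:
  (-1)^(d(d-1)/2) * Res(p, p') / lc(p). (The division is exact.)\<close>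
definition discriminant :: "'a :: {idom_divide} poly \<Rightarrow> 'a" where
  "discriminant p = ((-1) ^ (degree p * (degree p - 1) div 2) * resultant p (pderiv p))
                      div lead_coeff p"

text \<open>The bivariate polynomial f(t,x) = x^n + t g(x), viewed as a polynomial in x
  whose coefficients are polynomials in t.\<close>
definition fpoly :: "nat \<Rightarrow> real poly \<Rightarrow> real poly poly" where
  "fpoly n g = monom 1 n + map_poly (\<lambda>c. [:0, c:]) g"

definition disc_fx :: "nat \<Rightarrow> real poly \<Rightarrow> real poly" where
  "disc_fx n g = discriminant (fpoly n g)"

end

theory Submission
  imports Defs "Subresultants.Subresultant_Gcd" "HOL-Computational_Algebra.Field_as_Ring"
begin

lemma res_gcd_real: "resultant (p::real poly) q = 0 \<longleftrightarrow> degree (gcd p q) \<noteq> 0"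
  by (rule resultant_0_gcd)

lemma res0: assumes "[:0,1:] dvd p" "[:0,1:] dvd q" "p \<noteq> 0"
  shows "resultant (p::real poly) q = 0"
proof -
  have dv: "[:0,1:] dvd gcd p q" using assms(1,2) by (rule gcd_greatest)
  have "gcd p q \<noteq> 0" using assms(3) by (simp only: gcd_eq_0_iff) simp
  from dvd_imp_degree_le[OF dv this] have "degree (gcd p q) \<noteq> 0" by (simp only: degree_pCons_eq_if) simp
  thus ?thesis using res_gcd_real by blast
qed

definition ev0 :: "real poly \<Rightarrow> real" where "ev0 p = poly p 0"

lemma ev0_hom: "idom_hom ev0"
  by unfold_locales (auto simp: ev0_def)

lemma coeff_fpoly: "coeff (fpoly n g) i = (if i = n then 1 else 0) + [:0, coeff g i:]"
  unfolding fpoly_def by (simp add: coeff_map_poly)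

lemma degree_fpoly: assumes "degree g < n" shows "degree (fpoly n g) = n"
proof (rule antisym)
  have "coeff (fpoly n g) i = 0" if "i > n" for i
  proof -
    have "coeff g i = 0" using assms that by (intro coeff_eq_0) simp
    thus ?thesis using that by (simp add: coeff_fpoly)
  qed
  thus "degree (fpoly n g) \<le> n" by (intro degree_le) blast
  have "coeff g n = 0" using assms by (intro coeff_eq_0) simp
  hence "coeff (fpoly n g) n = 1" by (simp add: coeff_fpoly)
  thus "n \<le> degree (fpoly n g)" by (intro le_degree) simp
qed

lemma map_fpoly: "map_poly ev0 (fpoly n g) = monom 1 n"
  by (rule poly_eqI) (simp add: coeff_map_poly coeff_fpoly ev0_def)

lemma dvdA: "n \<ge> 2 \<Longrightarrow> [:0,1:] dvd monom (1::real) n"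
      unfolding monom_altdef by (intro dvd_smult dvd_power) auto
lemma dvdB: "n \<ge> 2 \<Longrightarrow> [:0,1:] dvd monom (of_nat n::real) (n - 1)"
      unfolding monom_altdef by (intro dvd_smult dvd_power) auto
lemma monom1_nz: "(monom (1::real) n) \<noteq> 0" by (simp only: monom_eq_0_iff) 

lemma disc0: assumes "degree g < n" "n \<ge> 2"
  shows "poly (disc_fx n g) 0 = 0"
proof -
  let ?F = "fpoly n g"
  have cr: "comm_ring_hom ev0" using ev0_hom by (simp add: idom_hom_def)
  have dF: "degree ?F = n" using degree_fpoly assms by auto
  have "coeff g n = 0" using assms by (intro coeff_eq_0) simp
  hence lc: "lead_coeff ?F = 1" using dF by (simp add: coeff_fpoly)
  have m1: "map_poly ev0 ?F = monom 1 n" by (rule map_fpoly)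
  have m2: "map_poly ev0 (pderiv ?F) = monom (of_nat n) (n - 1)"
    by (simp add: idom_hom.map_poly_pderiv[OF ev0_hom] m1 pderiv_monom)
  have d1: "degree (map_poly ev0 ?F) = degree ?F" using m1 dF by (simp add: degree_monom_eq)
  have d2: "degree (map_poly ev0 (pderiv ?F)) = degree (pderiv ?F)"
  proof -
    have "degree (pderiv ?F) = n - 1" by (simp only: degree_pderiv dF)
    moreover have "degree (monom (of_nat n :: real) (n - 1)) = n - 1"
      using assms(2) by (intro degree_monom_eq) simp
    ultimately show ?thesis by (simp only: m2)
  qed
  have "resultant (monom (1::real) n) (monom (of_nat n) (n - 1)) = 0"
    using res0[OF dvdA[OF assms(2)] dvdB[OF assms(2)] monom1_nz] .
  hence r0: "ev0 (resultant ?F (pderiv ?F)) = 0"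
    by (simp only: comm_ring_hom.resultant_map_poly[OF cr d1 d2, symmetric] m1 m2)
  have "disc_fx n g = (-1) ^ (degree ?F * (degree ?F - 1) div 2) * resultant ?F (pderiv ?F)"
    unfolding disc_fx_def discriminant_def lc by (rule div_by_1)
  hence "ev0 (disc_fx n g) = ev0 ((-1) ^ (degree ?F * (degree ?F - 1) div 2)) * ev0 (resultant ?F (pderiv ?F))"
    by (simp only: ev0_def poly_mult)
  hence "ev0 (disc_fx n g) = 0" by (simp only: r0 mult_zero_right)
  thus ?thesis by (simp only: ev0_def)
qed

lemma g_pos:
  fixes g :: "real poly"
  assumes "\<forall>x. poly g x \<noteq> 0" "lead_coeff g > 0"
  shows "poly g x > 0"
proof (rule ccontr)
  assume "\<not> poly g x > 0"
  moreover have "poly g x \<noteq> 0" using assms(1) by blast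
  ultimately have neg: "poly g x < 0" by linarith
  obtain N where N: "\<forall>y\<ge>N. poly g y \<ge> lead_coeff g" using poly_pinfty_gt_lc[OF assms(2)] by blast
  define b where "b = max N (x + 1)"
  have "b \<ge> N" by (simp add: b_def)
  hence "poly g b \<ge> lead_coeff g" using N by blast
  hence "poly g b > 0" using assms(2) by linarith
  moreover have "x < b" by (simp add: b_def)
  ultimately have "x < b" "poly g b > 0" by auto
  from poly_IVT_pos[OF this(1) neg this(2)] assms(1) show False by blast
qed

lemma deg_even:
  fixes g :: "real poly"
  assumes "\<forall>x. poly g x \<noteq> 0" "lead_coeff g > 0"
  shows "even (degree g)"
proof (rule ccontr)
  assume odd: "odd (degree g)"
  let ?h = "- (g \<circ>\<^sub>p [:0,-1:])"
  have "lead_coeff (g \<circ>\<^sub>p [:0,-1:]) = lead_coeff g * (-1) ^ degree g"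
    by (subst lead_coeff_comp) auto
  hence lh: "lead_coeff ?h = lead_coeff g" using odd by simp
  have lhpos: "lead_coeff ?h > 0" using lh assms(2) by simp
  obtain N where N: "\<forall>y\<ge>N. poly ?h y \<ge> lead_coeff ?h"
    using poly_pinfty_gt_lc[OF lhpos] by blast
  hence "poly ?h N \<ge> lead_coeff ?h" by blast
  hence "poly ?h N > 0" using lhpos by linarith
  hence "poly g (-N) < 0" by (simp add: poly_pcompose)
  with g_pos[OF assms, of "-N"] show False by simp
qed

theorem mainTheorem8:
  fixes n s :: nat and g :: "real poly"
  assumes "n > s" and "s \<ge> 1"
    and "degree g = s"
    and "discriminant g \<noteq> 0"
    and "\<forall>x::real. poly g x \<noteq> 0"
    and "even (n - s)"
    and "coeff g s > 0"
  shows "\<forall>\<beta>::real. (\<forall>\<alpha>::real. poly (disc_fx n g) \<alpha> = 0 \<longrightarrow> \<alpha> < \<beta>) \<longrightarrow>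
           (\<forall>x::real. poly (monom 1 n + smult \<beta> g) x \<noteq> 0)"
proof (intro allI impI)
  fix \<beta> x :: real
  assume H: "\<forall>\<alpha>::real. poly (disc_fx n g) \<alpha> = 0 \<longrightarrow> \<alpha> < \<beta>"
  have "poly (disc_fx n g) 0 = 0" using assms(1,2,3) by (intro disc0) auto
  with H have b: "\<beta> > 0" by blast
  have lc: "lead_coeff g > 0" using assms(3,7) by simp
  have gp: "poly g x > 0" using g_pos[OF assms(5) lc] .
  have "even s" using deg_even[OF assms(5) lc] assms(3) by simp
  moreover have "n = (n - s) + s" using assms(1) by simp
  ultimately have "even n" using assms(6) by (metis even_add)
  hence "x ^ n \<ge> 0" by (simp add: zero_le_even_power)
  moreover have "\<beta> * poly g x > 0" using b gp by simp
  ultimately have "poly (monom 1 n + smult \<beta> g) x > 0" by (simp add: poly_monom)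
  thus "poly (monom 1 n + smult \<beta> g) x \<noteq> 0" by simp
qed

end
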